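(* Consider the system $x[k+1]=Ax[k]+w[k]$, $y[k]=Cx[k]+v[k]$ with $A=\mathrm{diag}(\lambda_1,0,\dots,0)\in\mathbb{R}^{n\times n}$ where $0<|\lambda_1|<1$, a single-row measurement matrix $C=[1\ \gamma]$ with $\gamma\in\mathbb{R}^{1\times(n-1)}$, process noise covariance $W=I_{n\times n}$ and measurement noise covariance $V=\mathbf{0}$. Let $\Sigma$ be the steady-state a priori error covariance of the Kalman filter. Then, with $\alpha^2:=\lVert\gamma\rVert_2^2$, $$\Sigma_{11}=\frac{1+\alpha^2\lambda_1^2-\alpha^2+\sqrt{(\alpha^2-\alpha^2\lambda_1^2-1)^2+4\alpha^2}}{2}.$$ Moreover, viewing $\Sigma_{11}$ as a function $\Sigma_{11}(\alpha^2)$ of $\alpha^2\in\mathbb{R}_{\ge0}$, it is strictly increasing, with $\Sigma_{11}(0)=1$ and $\lim_{\alpha\to\infty}\Sigma_{11}(\alpha^2)=\frac{1}{1-\lambda_1^2}$.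
   Context: Here $w[k]$ and $v[k]$ are uncorrelated zero-mean white Gaussian noise processes with covariances $W$ and $V$. The steady-state a priori error covariance $\Sigma$ is the limit as $k\to\infty$ of the Kalman filter's a priori error covariance $\Sigma_{k|k-1}$; it satisfies $\Sigma=A\Sigma A^T+W-A\Sigma C^T(C\Sigma C^T+V)^{-1}C\Sigma A^T$, with the inverse interpreted as a pseudo-inverse when singular. *)

theory Defs
  imports Complex_Main "Jordan_Normal_Form.Matrix"
begin

definition psd_mat :: "nat \<Rightarrow> real mat \<Rightarrow> bool" where
  "psd_mat n S \<longleftrightarrow> S \<in> carrier_mat n n \<and> S\<^sup>T = S \<and>
     (\<forall>x \<in> carrier_vec n. 0 \<le> x \<bullet> (S *\<^sub>v x))"

text \<open>Moore--Penrose pseudo-inverse of a 1x1 matrix (the innovation covariance is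
  1x1 because the measurement matrix C has a single row).\<close>
definition pinv11 :: "real mat \<Rightarrow> real mat" where
  "pinv11 M = mat 1 1 (\<lambda>_. if M $$ (0,0) = 0 then 0 else 1 / M $$ (0,0))"

definition riccati_step ::
  "real mat \<Rightarrow> real mat \<Rightarrow> real mat \<Rightarrow> real mat \<Rightarrow> real mat \<Rightarrow> real mat" where
  "riccati_step A C W V S =
     A * S * A\<^sup>T + W - A * S * C\<^sup>T * pinv11 (C * S * C\<^sup>T + V) * (C * S * A\<^sup>T)"

text \<open>A priori error covariance Sigma_{k|k-1}, starting from Sigma_{0|-1} = S0.\<close>
definition kf_cov ::
  "real mat \<Rightarrow> real mat \<Rightarrow> real mat \<Rightarrow> real mat \<Rightarrow> real mat \<Rightarrow> nat \<Rightarrow> real mat" where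
  "kf_cov A C W V S0 k = (riccati_step A C W V ^^ k) S0"

definition sigma11 :: "real \<Rightarrow> real \<Rightarrow> real" where
  "sigma11 l a = (1 + a * l\<^sup>2 - a + sqrt ((a - a * l\<^sup>2 - 1)\<^sup>2 + 4 * a)) / 2"

end

theory Submission
  imports Defs
begin



definition Am :: "nat \<Rightarrow> real \<Rightarrow> real mat" where
  "Am n l = mat n n (\<lambda>(i,j). if i = 0 \<and> j = 0 then l else 0)"

lemma sum_d0: "0 < (n::nat) \<Longrightarrow> (\<Sum>k = 0..<n. if k = 0 then (g k::real) else 0) = g 0"
  by simp

lemma sum_d1: "0 < (n::nat) \<Longrightarrow> (\<Sum>k = 0..<n. (if P \<and> k = 0 then l else 0) * (f k::real)) = (if P then l * f 0 else 0)"
proof -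
  assume "0<n"
  have "(\<Sum>k = 0..<n. (if P \<and> k = 0 then l else 0) * (f k::real)) = (\<Sum>k = 0..<n. if k = 0 then (if P then l * f k else 0) else 0)"
    by (rule sum.cong) auto
  then show ?thesis using \<open>0<n\<close> sum_d0[of n "\<lambda>k. if P then l * f k else 0"] by simp
qed
lemma sum_d2: "0 < (n::nat) \<Longrightarrow> (\<Sum>k = 0..<n. (f k::real) * (if k = 0 \<and> P then l else 0)) = (if P then f 0 * l else 0)"
proof -
  assume "0<n"
  have "(\<Sum>k = 0..<n. (f k::real) * (if k = 0 \<and> P then l else 0)) = (\<Sum>k = 0..<n. if k = 0 then (if P then f k * l else 0) else 0)"
    by (rule sum.cong) auto
  then show ?thesis using \<open>0<n\<close> sum_d0[of n "\<lambda>k. if P then f k * l else 0"] by simp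
qed

lemma A_mult: "X \<in> carrier_mat n m \<Longrightarrow> i < n \<Longrightarrow> j < m \<Longrightarrow>
  (Am n l * X) $$ (i,j) = (if i = 0 then l * X $$ (0,j) else 0)"
  by (auto simp: Am_def scalar_prod_def row_def col_def sum_d1)

lemma mult_A: "X \<in> carrier_mat m n \<Longrightarrow> i < m \<Longrightarrow> j < n \<Longrightarrow>
  (X * Am n l) $$ (i,j) = (if j = 0 then X $$ (i,0) * l else 0)"
  by (auto simp: Am_def scalar_prod_def row_def col_def sum_d2)

lemma Am_carrier[simp]: "Am n l \<in> carrier_mat n n" by (simp add: Am_def)
lemma Am_T[simp]: "(Am n l)\<^sup>T = Am n l"
  by (rule eq_matI) (auto simp: Am_def)

lemma ric_entry:
  fixes S C :: "real mat"
  assumes S: "S \<in> carrier_mat n n" and C: "C \<in> carrier_mat 1 n" and i: "i < n" and j: "j < n"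
  shows "riccati_step (Am n l) C (1\<^sub>m n) (0\<^sub>m 1 1) S $$ (i,j) =
    (if i = 0 \<and> j = 0 then l * S $$ (0,0) * l else 0) + (if i = j then 1 else 0)
    - (if i = 0 then l * (S * C\<^sup>T) $$ (0,0) else 0) *
      (if (C * S * C\<^sup>T) $$ (0,0) = 0 then 0 else 1 / (C * S * C\<^sup>T) $$ (0,0)) *
      (if j = 0 then (C * S) $$ (0,0) * l else 0)"
proof -
  have n: "0 < n" using i by simp
  define A where "A = Am n l"
  have A: "A \<in> carrier_mat n n" by (simp add: A_def)
  have e1: "A * S * A\<^sup>T = A * S * A" by (simp add: A_def)
  have e2: "A * S * C\<^sup>T = A * (S * C\<^sup>T)" using A S C by (simp add: assoc_mult_mat[of _ n n _ n _ 1])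
  have e3: "C * S * A\<^sup>T = (C * S) * A" by (simp add: A_def)
  have SA: "S * A \<in> carrier_mat n n" using S A by simp
  have SC: "S * C\<^sup>T \<in> carrier_mat n 1" using S C by simp
  have CS: "C * S \<in> carrier_mat 1 n" using S C by simp
  have ASA: "(A * S * A) $$ (i,j) = (if i = 0 \<and> j = 0 then l * S $$ (0,0) * l else 0)"
  proof -
    have "(A * S * A) $$ (i,j) = (if j = 0 then (A * S) $$ (i,0) * l else 0)"
      unfolding A_def by (rule mult_A) (use S i j in \<open>auto intro: mult_carrier_mat[OF Am_carrier]\<close>)
    also have "\<dots> = (if i = 0 \<and> j = 0 then l * S $$ (0,0) * l else 0)"
      unfolding A_def using A_mult[OF S i n, of l] by (cases "i = 0") auto
    finally show ?thesis .
  qed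
  define M where "M = C * S * C\<^sup>T"
  have M: "M \<in> carrier_mat 1 1" using S C by (simp add: M_def)
  define P where "P = pinv11 (M + 0\<^sub>m 1 1)"
  have P: "P \<in> carrier_mat 1 1" by (simp add: P_def pinv11_def)
  have P00: "P $$ (0,0) = (if M $$ (0,0) = 0 then 0 else 1 / M $$ (0,0))"
    using M by (simp add: P_def pinv11_def)
  define X where "X = A * (S * C\<^sup>T)"
  define Y where "Y = (C * S) * A"
  have X: "X \<in> carrier_mat n 1" using A SC by (simp add: X_def)
  have Y: "Y \<in> carrier_mat 1 n" using A CS by (simp add: Y_def)
  have X0: "X $$ (i,0) = (if i = 0 then l * (S * C\<^sup>T) $$ (0,0) else 0)"
    unfolding X_def A_def by (rule A_mult[OF SC i]) simp
  have Y0: "Y $$ (0,j) = (if j = 0 then (C * S) $$ (0,0) * l else 0)"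
    unfolding Y_def A_def by (rule mult_A[OF CS _ j]) simp
  have XPY: "(X * P * Y) $$ (i,j) = X $$ (i,0) * P $$ (0,0) * Y $$ (0,j)"
    using X P Y i j by (simp add: scalar_prod_def)
  have ASAc: "A * S * A \<in> carrier_mat n n" using A S by simp
  have XPYc: "X * P * Y \<in> carrier_mat n n" using X P Y by simp
  have R: "riccati_step (Am n l) C (1\<^sub>m n) (0\<^sub>m 1 1) S = A * S * A + 1\<^sub>m n - X * P * Y"
    unfolding riccati_step_def A_def[symmetric] e1 e2 e3 X_def Y_def P_def M_def ..
  have E: "(A * S * A + 1\<^sub>m n - X * P * Y) $$ (i,j) = (A * S * A) $$ (i,j) + (1\<^sub>m n :: real mat) $$ (i,j) - (X * P * Y) $$ (i,j)"
    using i j carrier_matD[OF XPYc] by simp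
  show ?thesis
    unfolding R E XPY X0 Y0 P00 ASA M_def using i j by simp
qed
definition Cm :: "nat \<Rightarrow> (nat \<Rightarrow> real) \<Rightarrow> real mat" where
  "Cm n g = mat 1 n (\<lambda>(_,j). if j = 0 then 1 else g j)"
definition Dm :: "nat \<Rightarrow> real \<Rightarrow> real mat" where
  "Dm n s = mat n n (\<lambda>(i,j). if i = j then (if i = 0 then s else 1) else 0)"
abbreviation RR where "RR n l g \<equiv> riccati_step (Am n l) (Cm n g) (1\<^sub>m n) (0\<^sub>m 1 1)"

lemma Cm_carrier[simp]: "Cm n g \<in> carrier_mat 1 n" by (simp add: Cm_def)
lemma Dm_dim[simp]: "dim_row (Dm n s) = n" "dim_col (Dm n s) = n" by (simp_all add: Dm_def)
lemma Cm_dim[simp]: "dim_row (Cm n g) = 1" "dim_col (Cm n g) = n" by (simp_all add: Cm_def)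
lemma Cm_idx[simp]: "k < n \<Longrightarrow> Cm n g $$ (0,k) = (if k = 0 then 1 else g k)" by (simp add: Cm_def)
lemma Dm_carrier[simp]: "Dm n s \<in> carrier_mat n n" by (simp add: Dm_def)

lemma R_Dm:
  assumes S: "S \<in> carrier_mat n n" and n: "0 < n"
  shows "RR n l g S = Dm n (RR n l g S $$ (0,0))"
proof (rule eq_matI)
  fix i j assume i: "i < dim_row (Dm n (RR n l g S $$ (0,0)))" and j: "j < dim_col (Dm n (RR n l g S $$ (0,0)))"
  then have i: "i < n" and j: "j < n" by (auto simp: Dm_def)
  show "RR n l g S $$ (i,j) = Dm n (RR n l g S $$ (0,0)) $$ (i,j)"
    using ric_entry[OF S Cm_carrier i j, of l g] ric_entry[OF S Cm_carrier n n, of l g] i j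
    by (auto simp: Dm_def)
qed (auto simp: riccati_step_def Dm_def Am_def)

lemma R_Dm00:
  assumes n: "0 < n" and sa: "s + (\<Sum>j\<in>{1..<n}. (g j)\<^sup>2) \<noteq> 0"
  shows "RR n l g (Dm n s) $$ (0,0) = 1 + l\<^sup>2 * s * (\<Sum>j\<in>{1..<n}. (g j)\<^sup>2) / (s + (\<Sum>j\<in>{1..<n}. (g j)\<^sup>2))"
proof -
  define a where "a = (\<Sum>j\<in>{1..<n}. (g j)\<^sup>2)"
  have CD: "(Cm n g * Dm n s) $$ (0,k) = (if k = 0 then s else g k)" if k: "k < n" for k
  proof -
    have "(Cm n g * Dm n s) $$ (0,k) = (\<Sum>m = 0..<n. (if m = 0 then 1 else g m) * (if m = k then (if m = 0 then s else 1) else 0))"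
      using k by (simp add: Cm_def Dm_def scalar_prod_def)
    also have "\<dots> = (\<Sum>m = 0..<n. if m = k then (if k = 0 then s else g k) else 0)"
      by (rule sum.cong) auto
    also have "\<dots> = (if k = 0 then s else g k)" using k by simp
    finally show ?thesis .
  qed
  have p': "(Cm n g * Dm n s) $$ (0,0) = s" using CD n by simp
  have p: "(Dm n s * (Cm n g)\<^sup>T) $$ (0,0) = s"
  proof -
    have "(Dm n s * (Cm n g)\<^sup>T) $$ (0,0) = (\<Sum>m = 0..<n. (if 0 = m then s else 0) * (if m = 0 then 1 else g m))"
      using n by (simp add: Cm_def Dm_def scalar_prod_def)
    also have "\<dots> = (\<Sum>m = 0..<n. if m = 0 then s else 0)"
      by (rule sum.cong) auto
    finally show ?thesis using n by simp
  qed
  have q: "(Cm n g * Dm n s * (Cm n g)\<^sup>T) $$ (0,0) = s + a"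
  proof -
    have "(Cm n g * Dm n s * (Cm n g)\<^sup>T) $$ (0,0) = row (Cm n g * Dm n s) 0 \<bullet> col (Cm n g)\<^sup>T 0"
      by (rule index_mult_mat(1)) (simp_all add: Cm_def)
    also have "\<dots> = (\<Sum>k = 0..<n. (Cm n g * Dm n s) $$ (0,k) * (if k = 0 then 1 else g k))"
      unfolding scalar_prod_def by (intro sum.cong) auto
    also have "\<dots> = (\<Sum>k = 0..<n. if k = 0 then s else (g k)\<^sup>2)"
      by (rule sum.cong) (auto simp: CD power2_eq_square simp del: index_mult_mat)
    also have "\<dots> = s + (\<Sum>k = 1..<n. if k = 0 then s else (g k)\<^sup>2)"
      using n by (simp add: sum.atLeast_Suc_lessThan)
    also have "\<dots> = s + a" unfolding a_def by (intro arg_cong2[where f="(+)"] refl sum.cong) auto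
    finally show ?thesis .
  qed
  show ?thesis
    unfolding ric_entry[OF Dm_carrier Cm_carrier n n] p p' q a_def[symmetric]
    using sa n unfolding a_def[symmetric] by (simp add: Dm_def field_simps power2_eq_square)
qed

lemma psd_step:
  assumes P: "psd_mat n S" and n: "0 < n"
  shows "1 \<le> RR n l g S $$ (0,0)"
proof -
  have S: "S \<in> carrier_mat n n" and sym: "S\<^sup>T = S" and Q: "\<And>x. x \<in> carrier_vec n \<Longrightarrow> 0 \<le> x \<bullet> (S *\<^sub>v x)"
    using P unfolding psd_mat_def by blast+
  define C where "C = Cm n g"
  have C: "C \<in> carrier_mat 1 n" unfolding C_def by (rule Cm_carrier)
  define cv where "cv = row C 0"
  have cv: "cv \<in> carrier_vec n" unfolding cv_def C_def using row_carrier[of "Cm n g" 0] by simp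
  define e where "e = (unit_vec n 0 :: real vec)"
  have e: "e \<in> carrier_vec n" by (simp add: e_def)
  define p where "p = (S * C\<^sup>T) $$ (0,0)"
  define p' where "p' = (C * S) $$ (0,0)"
  define q where "q = (C * S * C\<^sup>T) $$ (0,0)"
  have Se: "S *\<^sub>v e = col S 0"
    by (rule eq_vecI) (use S n in \<open>auto simp: e_def\<close>)
  have i1: "e \<bullet> (S *\<^sub>v e) = S $$ (0,0)" using S n e by (simp add: Se e_def)
  have i2: "e \<bullet> (S *\<^sub>v cv) = p" using S n cv C by (simp add: e_def p_def cv_def)
  have i3: "cv \<bullet> (S *\<^sub>v e) = p'" using S n C by (simp add: Se p'_def cv_def)
  have pp: "p' = p"
  proof -
    have "p' = (C * S)\<^sup>T $$ (0,0)" using S C n by (simp add: p'_def)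
    also have "(C * S)\<^sup>T = S\<^sup>T * C\<^sup>T" using S C by (simp add: transpose_mult)
    finally show ?thesis using sym by (simp add: p_def)
  qed
  have i4: "cv \<bullet> (S *\<^sub>v cv) = q"
  proof -
    have "C * S * C\<^sup>T = C * (S * C\<^sup>T)" using S C by (simp add: assoc_mult_mat[of _ 1 n _ n _ 1])
    then have "q = row C 0 \<bullet> col (S * C\<^sup>T) 0" using S C by (simp add: q_def)
    also have "col (S * C\<^sup>T) 0 = S *\<^sub>v cv" using S C by (simp add: cv_def mult_mat_vec_def)
    finally show ?thesis by (simp add: cv_def)
  qed
  have quad: "0 \<le> S $$ (0,0) - 2 * t * p + t\<^sup>2 * q" for t
  proof -
    have "0 \<le> (e - t \<cdot>\<^sub>v cv) \<bullet> (S *\<^sub>v (e - t \<cdot>\<^sub>v cv))" using Q e cv by simp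
    also have "S *\<^sub>v (e - t \<cdot>\<^sub>v cv) = S *\<^sub>v e - t \<cdot>\<^sub>v (S *\<^sub>v cv)"
      using S e cv by (simp add: mult_minus_distrib_mat_vec[OF S] mult_mat_vec[OF S])
    also have "(e - t \<cdot>\<^sub>v cv) \<bullet> (S *\<^sub>v e - t \<cdot>\<^sub>v (S *\<^sub>v cv))
       = (e \<bullet> (S *\<^sub>v e) - t * (e \<bullet> (S *\<^sub>v cv))) - (t * (cv \<bullet> (S *\<^sub>v e)) - t * (t * (cv \<bullet> (S *\<^sub>v cv))))"
    proof -
      have u: "S *\<^sub>v e \<in> carrier_vec n" "S *\<^sub>v cv \<in> carrier_vec n" "t \<cdot>\<^sub>v (S *\<^sub>v cv) \<in> carrier_vec n"
        "t \<cdot>\<^sub>v cv \<in> carrier_vec n" "S *\<^sub>v e - t \<cdot>\<^sub>v (S *\<^sub>v cv) \<in> carrier_vec n"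
        using S e cv by auto
      show ?thesis
        apply (subst minus_scalar_prod_distrib[OF e u(4) u(5)])
        apply (subst scalar_prod_minus_distrib[OF e u(1) u(3)])
        apply (subst scalar_prod_minus_distrib[OF u(4) u(1) u(3)])
        using u e cv by simp
    qed
    also have "\<dots> = S $$ (0,0) - 2 * t * p + t\<^sup>2 * q"
      unfolding i1 i2 i3 i4 pp by (simp add: power2_eq_square)
    finally show ?thesis .
  qed
  have q0: "0 \<le> q" using Q[OF cv] i4 by simp
  have s0: "0 \<le> S $$ (0,0)" using quad[of 0] by simp
  have E: "RR n l g S $$ (0,0) = l * S $$ (0,0) * l + 1 - l * p * (if q = 0 then 0 else 1 / q) * (p * l)"
    using ric_entry[OF S Cm_carrier n n, of l g] pp unfolding C_def[symmetric] p_def[symmetric] p'_def[symmetric] q_def[symmetric]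
    by simp
  show ?thesis
  proof (cases "q = 0")
    case True
    have "0 \<le> l * S $$ (0,0) * l" using s0 by (metis mult.commute mult.left_commute mult_nonneg_nonneg zero_le_square)
    then show ?thesis using E True by simp
  next
    case False
    then have qp: "0 < q" using q0 by simp
    have "0 \<le> S $$ (0,0) - 2 * (p/q) * p + (p/q)\<^sup>2 * q" by (rule quad)
    also have "\<dots> = S $$ (0,0) - p\<^sup>2 / q" using qp by (simp add: field_simps power2_eq_square)
    finally have k: "0 \<le> S $$ (0,0) - p\<^sup>2 / q" .
    have "RR n l g S $$ (0,0) = 1 + l\<^sup>2 * (S $$ (0,0) - p\<^sup>2 / q)"
      using E False by (simp add: field_simps power2_eq_square)
    then show ?thesis using k by simp
  qed
qed

lemma sigma_root:
  assumes a: "0 \<le> a" and l: "l\<^sup>2 \<le> 1"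
  shows "1 \<le> sigma11 l a \<and> (sigma11 l a)\<^sup>2 - sigma11 l a = a * (1 - (1 - l\<^sup>2) * sigma11 l a)"
proof -
  define b where "b = a - a * l\<^sup>2 - 1"
  define r where "r = sqrt (b\<^sup>2 + 4 * a)"
  have r0: "0 \<le> r" using a by (simp add: r_def)
  have r2: "r\<^sup>2 = b\<^sup>2 + 4 * a" using a unfolding r_def by (simp add: add_nonneg_nonneg)
  have s: "sigma11 l a = (r - b) / 2" unfolding sigma11_def r_def b_def by simp
  have "2 + b \<le> r"
  proof (cases "2 + b \<le> 0")
    case True then show ?thesis using r0 by simp
  next
    case False
    have "(2 + b)\<^sup>2 \<le> r\<^sup>2" unfolding r2 using a l
      by (simp add: b_def power2_eq_square algebra_simps mult_left_le)
    then show ?thesis using False r0 by (simp add: power2_le_iff_abs_le)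
  qed
  then have "1 \<le> sigma11 l a" unfolding s by simp
  moreover have "(sigma11 l a)\<^sup>2 - sigma11 l a = a * (1 - (1 - l\<^sup>2) * sigma11 l a)"
    unfolding s using r2 by (simp add: b_def power2_eq_square field_simps)
  ultimately show ?thesis by simp
qed

lemma sigma_unique:
  assumes a: "0 \<le> a" and l: "l\<^sup>2 \<le> 1" and L: "1 \<le> L"
    and eq: "L\<^sup>2 - L = a * (1 - (1 - l\<^sup>2) * L)"
  shows "L = sigma11 l a"
proof -
  define b where "b = a - a * l\<^sup>2 - 1"
  have "(2 * L + b)\<^sup>2 = b\<^sup>2 + 4 * a" using eq by (simp add: b_def power2_eq_square algebra_simps)
  moreover have "0 \<le> 2 * L + b" using a l L
    by (simp add: b_def algebra_simps) (smt (verit) mult_left_le)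
  ultimately have "2 * L + b = sqrt (b\<^sup>2 + 4 * a)" by (metis real_sqrt_abs abs_of_nonneg)
  then show ?thesis unfolding sigma11_def b_def[symmetric] by (simp add: b_def algebra_simps)
qed
lemma sigma_mono:
  assumes l: "0 < l\<^sup>2" "l\<^sup>2 < 1"
  shows "strict_mono_on {0..} (sigma11 l)"
proof (rule strict_mono_onI)
  fix x y :: real assume x: "x \<in> {0..}" and y: "y \<in> {0..}" and xy: "x < y"
  define c where "c = 1 - l\<^sup>2"
  have c: "0 < c" "c < 1" using l by (auto simp: c_def)
  define sx where "sx = sigma11 l x"
  define sy where "sy = sigma11 l y"
  have x0: "0 \<le> x" and y0: "0 < y" using x y xy by auto
  have hx: "1 \<le> sx" "sx\<^sup>2 - sx = x * (1 - c * sx)" using sigma_root[of x l] x0 l unfolding sx_def c_def by auto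
  have hy: "1 \<le> sy" "sy\<^sup>2 - sy = y * (1 - c * sy)" using sigma_root[of y l] y0 l unfolding sy_def c_def by auto
  show "sigma11 l x < sigma11 l y"
  proof (rule ccontr)
    assume "\<not> ?thesis"
    then have le: "sy \<le> sx" unfolding sx_def sy_def by simp
    have "0 \<le> sy\<^sup>2 - sy" using hy(1) by (simp add: power2_eq_square)
    then have "0 \<le> 1 - c * sy" using hy(2) y0 by (simp add: zero_le_mult_iff)
    moreover have "1 - c * sy \<noteq> 0"
    proof
      assume "1 - c * sy = 0"
      then have "sy\<^sup>2 - sy = 0" using hy(2) by simp
      then have "sy = 1" using hy(1) by (simp add: power2_eq_square)
      then show False using \<open>1 - c * sy = 0\<close> c by simp
    qed
    ultimately have pos: "0 < 1 - c * sy" by simp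
    have "sx\<^sup>2 - sx - (sy\<^sup>2 - sy) = (sx - sy) * (sx + sy - 1)" by (simp add: power2_eq_square algebra_simps)
    moreover have "0 \<le> (sx - sy) * (sx + sy - 1)" using le hy(1) by simp
    ultimately have "sy\<^sup>2 - sy \<le> sx\<^sup>2 - sx" by simp
    also have "\<dots> = x * (1 - c * sx)" by (rule hx(2))
    also have "\<dots> \<le> x * (1 - c * sy)" using x0 le c by (intro mult_left_mono) auto
    also have "\<dots> < y * (1 - c * sy)" using xy pos by simp
    finally show False using hy(2) by simp
  qed
qed

lemma sigma_zero: "sigma11 l 0 = 1" by (simp add: sigma11_def)

lemma sigma_lim:
  assumes l: "0 < l\<^sup>2" "l\<^sup>2 < 1"
  shows "((\<lambda>\<alpha>. sigma11 l (\<alpha>\<^sup>2)) \<longlongrightarrow> 1 / (1 - l\<^sup>2)) at_top"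
proof -
  define c where "c = 1 - l\<^sup>2"
  have c: "0 < c" "c < 1" using l by (auto simp: c_def)
  have bound: "1 / c - 1 / (c ^ 3 * x\<^sup>2) \<le> sigma11 l (x\<^sup>2) \<and> sigma11 l (x\<^sup>2) \<le> 1 / c" if x: "1 \<le> x" for x :: real
  proof -
    define a where "a = x\<^sup>2"
    have a: "0 < a" using x by (simp add: a_def)
    define s where "s = sigma11 l a"
    have h: "1 \<le> s" "s\<^sup>2 - s = a * (1 - c * s)" using sigma_root[of a l] a l unfolding s_def c_def by auto
    have "0 \<le> s\<^sup>2 - s" using h(1) by (simp add: power2_eq_square)
    then have p: "0 \<le> 1 - c * s" using h(2) a by (simp add: zero_le_mult_iff)
    then have up: "s \<le> 1 / c" using c by (simp add: field_simps)
    have "(s\<^sup>2 - s) / (a * c) = (1 - c * s) / c" unfolding h(2) using a by simp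
    also have "\<dots> = 1 / c - s" using c by (simp add: field_simps)
    finally have "1 / c - s = (s\<^sup>2 - s) / (a * c)" by simp
    also have "\<dots> \<le> s\<^sup>2 / (a * c)" using h(1) a c by (intro divide_right_mono) auto
    also have "\<dots> \<le> (1 / c)\<^sup>2 / (a * c)" using h(1) a c up by (intro divide_right_mono power_mono) auto
    also have "\<dots> = 1 / (c ^ 3 * a)" using c by (simp add: field_simps power2_eq_square power3_eq_cube)
    finally show ?thesis using up unfolding s_def a_def by simp
  qed
  have lim0: "((\<lambda>x::real. 1 / (c ^ 3 * x\<^sup>2)) \<longlongrightarrow> 0) at_top"
  proof -
    have "filterlim (\<lambda>x::real. c ^ 3 * x\<^sup>2) at_top at_top"
      using c by (intro filterlim_tendsto_pos_mult_at_top[OF tendsto_const] filterlim_pow_at_top filterlim_ident) auto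
    from tendsto_inverse_0_at_top[OF this] show ?thesis by (simp add: inverse_eq_divide)
  qed
  show ?thesis unfolding c_def[symmetric]
  proof (rule tendsto_sandwich[where f="\<lambda>x. 1 / c - 1 / (c ^ 3 * x\<^sup>2)" and h="\<lambda>x. 1 / c"])
    show "\<forall>\<^sub>F x in at_top. 1 / c - 1 / (c ^ 3 * x\<^sup>2) \<le> sigma11 l (x\<^sup>2)"
      using bound by (intro eventually_at_top_linorderI[of 1]) auto
    show "\<forall>\<^sub>F x in at_top. sigma11 l (x\<^sup>2) \<le> 1 / c"
      using bound by (intro eventually_at_top_linorderI[of 1]) auto
    show "((\<lambda>x. 1 / c - 1 / (c ^ 3 * x\<^sup>2)) \<longlongrightarrow> 1 / c) at_top"
      using tendsto_diff[OF tendsto_const lim0, of "1/c"] by simp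
  qed simp
qed


theorem lemma3:
  fixes n :: nat and l1 :: real and \<gamma> :: "nat \<Rightarrow> real"
    and S0 \<Sigma> :: "real mat"
  assumes n: "2 \<le> n"
    and l1: "0 < \<bar>l1\<bar>" "\<bar>l1\<bar> < 1"
    and S0: "psd_mat n S0"
    and \<Sigma>: "\<Sigma> \<in> carrier_mat n n"
    and lim: "\<forall>i<n. \<forall>j<n.
      (\<lambda>k. kf_cov (mat n n (\<lambda>(i,j). if i = 0 \<and> j = 0 then l1 else 0))
                  (mat 1 n (\<lambda>(_,j). if j = 0 then 1 else \<gamma> j))
                  (1\<^sub>m n) (0\<^sub>m 1 1) S0 k $$ (i,j)) \<longlonglongrightarrow> \<Sigma> $$ (i,j)"
  shows "\<Sigma> $$ (0,0) = sigma11 l1 (\<Sum>j\<in>{1..<n}. (\<gamma> j)\<^sup>2)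
    \<and> strict_mono_on {0..} (sigma11 l1)
    \<and> sigma11 l1 0 = 1
    \<and> ((\<lambda>\<alpha>. sigma11 l1 (\<alpha>\<^sup>2)) \<longlongrightarrow> 1 / (1 - l1\<^sup>2)) at_top"
proof -
  have n0: "0 < n" using n by simp
  have l2: "0 < l1\<^sup>2" "l1\<^sup>2 < 1"
  proof -
    show "0 < l1\<^sup>2" using l1 by simp
    have "\<bar>l1\<bar> ^ 2 < 1 ^ 2" by (rule power_strict_mono) (use l1 in auto)
    then show "l1\<^sup>2 < 1" by simp
  qed
  define a where "a = (\<Sum>j\<in>{1..<n}. (\<gamma> j)\<^sup>2)"
  have a0: "0 \<le> a" unfolding a_def by (intro sum_nonneg) simp
  define K where "K k = kf_cov (Am n l1) (Cm n \<gamma>) (1\<^sub>m n) (0\<^sub>m 1 1) S0 k" for k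
  have KS: "K (Suc k) = RR n l1 \<gamma> (K k)" for k by (simp add: K_def kf_cov_def)
  define s where "s k = K k $$ (0,0)" for k
  define f where "f x = 1 + l1\<^sup>2 * x * a / (x + a)" for x
  have S0c: "S0 \<in> carrier_mat n n" using S0 unfolding psd_mat_def by blast
  have sSuc: "s (Suc k) = RR n l1 \<gamma> (K k) $$ (0,0)" for k unfolding s_def KS ..
  have inv: "K (Suc k) = Dm n (s (Suc k)) \<and> 1 \<le> s (Suc k)" for k
  proof (induction k)
    case 0
    have e0: "K 0 = S0" by (simp add: K_def kf_cov_def)
    have "K (Suc 0) = Dm n (RR n l1 \<gamma> S0 $$ (0,0))"
      unfolding KS e0 by (rule R_Dm[OF S0c n0])
    moreover have "s (Suc 0) = RR n l1 \<gamma> S0 $$ (0,0)" unfolding sSuc e0 ..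
    ultimately show ?case using psd_step[OF S0 n0, of l1 \<gamma>] by simp
  next
    case (Suc k)
    have sa: "s (Suc k) + (\<Sum>j\<in>{1..<n}. (\<gamma> j)\<^sup>2) \<noteq> 0" using Suc a0 unfolding a_def by simp
    have v: "RR n l1 \<gamma> (Dm n (s (Suc k))) $$ (0,0) = f (s (Suc k))"
      unfolding f_def a_def by (rule R_Dm00[OF n0 sa])
    have e: "K (Suc (Suc k)) = RR n l1 \<gamma> (Dm n (s (Suc k)))" using Suc unfolding KS[of "Suc k"] by simp
    have "K (Suc (Suc k)) = Dm n (f (s (Suc k)))"
      using trans[OF e R_Dm[OF Dm_carrier n0, of l1 \<gamma> "s (Suc k)"]] unfolding v .
    moreover have "s (Suc (Suc k)) = f (s (Suc k))" unfolding sSuc[of "Suc k"] using Suc v by simp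
    moreover have "1 \<le> f (s (Suc k))" using Suc a0 unfolding f_def by simp
    ultimately show ?case by simp
  qed
  have rec: "s (Suc (Suc k)) = f (s (Suc k))" for k
  proof -
    have sa: "s (Suc k) + (\<Sum>j\<in>{1..<n}. (\<gamma> j)\<^sup>2) \<noteq> 0" using inv[of k] a0 unfolding a_def by simp
    have v: "RR n l1 \<gamma> (Dm n (s (Suc k))) $$ (0,0) = f (s (Suc k))"
      unfolding f_def a_def by (rule R_Dm00[OF n0 sa])
    show ?thesis unfolding sSuc[of "Suc k"] using inv[of k] v by simp
  qed
  have AE: "mat n n (\<lambda>(i,j). if i = 0 \<and> j = 0 then l1 else 0) = Am n l1" unfolding Am_def ..
  have CE: "mat 1 n (\<lambda>(_,j). if j = 0 then 1 else \<gamma> j) = Cm n \<gamma>" unfolding Cm_def ..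
  define L where "L = \<Sigma> $$ (0,0)"
  have sL0: "(\<lambda>k. K k $$ (0,0)) \<longlonglongrightarrow> L" using lim n0 unfolding AE CE L_def K_def by blast
  have sfun: "s = (\<lambda>k. K k $$ (0,0))" by (rule ext) (simp only: s_def)
  have sL: "s \<longlonglongrightarrow> L" using sL0 unfolding sfun .
  have L1: "1 \<le> L"
  proof (rule LIMSEQ_le_const[OF sL])
    show "\<exists>N. \<forall>m\<ge>N. 1 \<le> s m"
    proof (intro exI allI impI)
      fix m :: nat assume "1 \<le> m"
      then obtain k where "m = Suc k" by (cases m) auto
      moreover have "1 \<le> s (Suc k)" using inv[of k] by (rule conjunct2)
      ultimately show "1 \<le> s m" by (simp only:)
    qed
  qed
  have t1: "(\<lambda>k. s (Suc (Suc k))) \<longlonglongrightarrow> L" using LIMSEQ_Suc[OF LIMSEQ_Suc[OF sL]] LIMSEQ_Suc[OF sL] by simp_all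
  have t2: "(\<lambda>k. f (s (Suc k))) \<longlonglongrightarrow> f L"
  proof -
    have "(\<lambda>k. s (Suc k)) \<longlonglongrightarrow> L" using LIMSEQ_Suc[OF LIMSEQ_Suc[OF sL]] LIMSEQ_Suc[OF sL] by simp_all
    moreover have "L + a \<noteq> 0" using L1 a0 by simp
    ultimately show ?thesis unfolding f_def by (intro tendsto_intros) auto
  qed
  have fe: "(\<lambda>k. s (Suc (Suc k))) = (\<lambda>k. f (s (Suc k)))" by (rule ext) (rule rec)
  have fixL: "L = f L" using LIMSEQ_unique[OF t1] t2 unfolding fe by blast
  have "L * (L + a) = (L + a) + l1\<^sup>2 * L * a"
  proof -
    have "L + a \<noteq> 0" using L1 a0 by simp
    moreover have "1 + l1\<^sup>2 * L * a / (L + a) = L" using fixL[symmetric] unfolding f_def .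
    ultimately have "(1 + l1\<^sup>2 * L * a / (L + a)) * (L + a) = L * (L + a)" by (simp only:)
    moreover have "(1 + l1\<^sup>2 * L * a / (L + a)) * (L + a) = (L + a) + l1\<^sup>2 * L * a"
      using \<open>L + a \<noteq> 0\<close> by (simp add: distrib_right)
    ultimately show ?thesis by simp
  qed
  then have eq: "L\<^sup>2 - L = a * (1 - (1 - l1\<^sup>2) * L)" by (simp add: power2_eq_square algebra_simps)
  have "L = sigma11 l1 a" using sigma_unique[OF a0 _ L1 eq] l2 by simp
  then show ?thesis using sigma_mono[OF l2] sigma_zero[of l1] sigma_lim[OF l2]
    by (simp add: L_def a_def)
qed

end
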